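(* Let $\mathbb{X}$ be a finite set, $\mathcal{H}_A$ a finite-dimensional Hilbert space, and $\{\rho_A^x\}_{x\in\mathbb{X}}$ density operators on $\mathcal{H}_A$. Then \[ \mathcal{Q}(X\rightarrow A)_{\rho_A}\leq\mathcal{B}(X\rightarrow A)_{\rho_A}\leq\mathcal{R}(X\rightarrow A)_{\rho_A}. \]
   Context: All logarithms are base 2. $\Delta(\mathbb{X})$ is the set of probability mass functions on $\mathbb{X}$. For a density operator $\rho$ and positive semi-definite $\sigma$, $\widetilde{D}_\infty(\rho\|\sigma)=\log\big(\inf\{\mu\in\mathbb{R}:\rho\leq\mu\sigma\}\big)$ ($+\infty$ if the support of $\rho$ is not contained in that of $\sigma$). Maximal quantum leakage: $\mathcal{Q}(X\rightarrow A)_{\rho_A}=\sup_{\{F_y\}_{y\in\mathbb{Y}}}\log\big(\sum_{y\in\mathbb{Y}}\max_{x\in\mathbb{X}}\operatorname{tr}(\rho_A^xF_y)\big)$, the supremum over all POVMs on $\mathcal{H}_A$ with arbitrary finite outcome set $\mathbb{Y}$. Barycentric quantum Rényi leakage: $\mathcal{B}(X\rightarrow A)_{\rho_A}=\min_{\pi\in\Delta(\mathbb{X})}\max_{x\in\mathbb{X}}\widetilde{D}_\infty\big(\rho_A^x\,\|\,\sum_{x'}\pi(x')\rho_A^{x'}\big)$. Pairwise quantum Rényi leakage: $\mathcal{R}(X\rightarrow A)_{\rho_A}=\max_{x,x'\in\mathbb{X}}\widetilde{D}_\infty(\rho_A^x\|\rho_A^{x'})$. *)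

theory Defs
  imports "HOL-Analysis.Analysis"
begin

text \<open>Operators on a finite-dimensional Hilbert space H_A = C^'n are complex matrices
  of type complex^'n^'n (the dimension 'n is an arbitrary finite type).\<close>

definition adjoint_mat :: "complex^'n^'n \<Rightarrow> complex^'n^'n" where
  "adjoint_mat A = (\<chi> i j. cnj (A $ j $ i))"

definition hermitian_mat :: "complex^'n^'n \<Rightarrow> bool" where
  "hermitian_mat A \<longleftrightarrow> adjoint_mat A = A"

definition qform :: "complex^'n^'n \<Rightarrow> complex^'n \<Rightarrow> complex" where
  "qform A v = (\<Sum>i\<in>UNIV. cnj (v $ i) * (A *v v) $ i)"

definition psd :: "complex^'n^'n \<Rightarrow> bool" where
  "psd A \<longleftrightarrow> hermitian_mat A \<and> (\<forall>v. 0 \<le> Re (qform A v))"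

definition loewner_le :: "complex^'n^'n \<Rightarrow> complex^'n^'n \<Rightarrow> bool" where
  "loewner_le A B \<longleftrightarrow> psd (B - A)"

definition density_op :: "complex^'n^'n \<Rightarrow> bool" where
  "density_op \<rho> \<longleftrightarrow> psd \<rho> \<and> trace \<rho> = 1"

definition supp_op :: "complex^'n^'n \<Rightarrow> (complex^'n) set" where
  "supp_op A = range (\<lambda>v. A *v v)"

definition Dmax :: "complex^'n^'n \<Rightarrow> complex^'n^'n \<Rightarrow> ereal" where
  "Dmax \<rho> \<sigma> =
     (if supp_op \<rho> \<subseteq> supp_op \<sigma>
      then ereal (log 2 (Inf {\<mu>::real. loewner_le \<rho> (\<mu> *\<^sub>R \<sigma>)}))
      else \<infinity>)"

text \<open>POVMs on H_A with a finite outcome set Y (w.l.o.g. a finite set of naturals).\<close>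
definition povm :: "nat set \<Rightarrow> (nat \<Rightarrow> complex^'n^'n) \<Rightarrow> bool" where
  "povm Y F \<longleftrightarrow> finite Y \<and> (\<forall>y\<in>Y. psd (F y)) \<and> (\<Sum>y\<in>Y. F y) = mat 1"

definition max_quantum_leakage :: "'x set \<Rightarrow> ('x \<Rightarrow> complex^'n^'n) \<Rightarrow> ereal" where
  "max_quantum_leakage X \<rho> =
     (SUP YF \<in> {(Y, F). povm Y F}.
        ereal (log 2 (\<Sum>y\<in>fst YF. Max ((\<lambda>x. Re (trace (\<rho> x ** snd YF y))) ` X))))"

definition prob_dist :: "'x set \<Rightarrow> ('x \<Rightarrow> real) set" where
  "prob_dist X = {\<pi>. (\<forall>x\<in>X. 0 \<le> \<pi> x) \<and> (\<Sum>x\<in>X. \<pi> x) = 1}"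

definition barycentric_leakage :: "'x set \<Rightarrow> ('x \<Rightarrow> complex^'n^'n) \<Rightarrow> ereal" where
  "barycentric_leakage X \<rho> =
     (INF \<pi> \<in> prob_dist X. Max ((\<lambda>x. Dmax (\<rho> x) (\<Sum>x'\<in>X. \<pi> x' *\<^sub>R \<rho> x')) ` X))"

definition pairwise_leakage :: "'x set \<Rightarrow> ('x \<Rightarrow> complex^'n^'n) \<Rightarrow> ereal" where
  "pairwise_leakage X \<rho> = Max ((\<lambda>(x, x'). Dmax (\<rho> x) (\<rho> x')) ` (X \<times> X))"

end

theory Submission
  imports Defs
begin



definition psdOn :: "'a set \<Rightarrow> ('a \<Rightarrow> 'a \<Rightarrow> complex) \<Rightarrow> bool" where
 "psdOn I P \<longleftrightarrow> (\<forall>i\<in>I. \<forall>j\<in>I. P j i = cnj (P i j)) \<and>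
    (\<forall>v. 0 \<le> Re (\<Sum>i\<in>I. \<Sum>j\<in>I. cnj (v i) * P i j * v j))"

lemma psdOn_diag_real: "psdOn I P \<Longrightarrow> i \<in> I \<Longrightarrow> P i i = of_real (Re (P i i))"
proof -
  assume a: "psdOn I P" "i \<in> I"
  have "P i i = cnj (P i i)" using a unfolding psdOn_def by blast
  hence "Im (P i i) = Im (cnj (P i i))" by (rule arg_cong)
  hence "Im (P i i) = 0" by simp
  thus ?thesis by (simp add: complex_eq_iff)
qed

lemma psdOn_diag_nonneg: "psdOn I P \<Longrightarrow> finite I \<Longrightarrow> i \<in> I \<Longrightarrow> 0 \<le> Re (P i i)"
proof -
  assume a: "psdOn I P" "finite I" "i \<in> I"
  define v where "v = (\<lambda>x. if x = i then (1::complex) else 0)"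
  have "0 \<le> Re (\<Sum>i'\<in>I. \<Sum>j\<in>I. cnj (v i') * P i' j * v j)"
    using a unfolding psdOn_def by blast
  also have "(\<Sum>i'\<in>I. \<Sum>j\<in>I. cnj (v i') * P i' j * v j) = P i i"
  proof -
    have pt: "cnj (v i') * P i' j * v j = (if j = i then (if i' = i then P i' j else 0) else 0)" for i' j
      by (simp add: v_def)
    show ?thesis unfolding pt using a by (simp add: sum.delta)
  qed
  finally show ?thesis .
qed

lemma pos_limit_aux:
  fixes c d :: real
  assumes "\<And>e. e > 0 \<Longrightarrow> - e * d \<le> c" "0 \<le> d" shows "0 \<le> c"
proof (rule ccontr)
  assume "\<not> 0 \<le> c"
  show False
  proof (cases "d = 0")
    case True then show False using assms(1)[of 1] \<open>\<not> 0 \<le> c\<close> by simp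
  next
    case False
    hence "d > 0" using assms(2) by simp
    have "-c/(2*d) > 0" using \<open>d>0\<close> \<open>\<not> 0 \<le> c\<close> by (simp add: field_simps)
    from assms(1)[OF this] have "- (-c/(2*d)) * d \<le> c" .
    hence "c/2 \<le> c" using \<open>d>0\<close> by (simp add: field_simps)
    thus False using \<open>\<not> 0 \<le> c\<close> by simp
  qed
qed

lemma sum_insert2:
  assumes "finite I" "k \<notin> I"
  shows "(\<Sum>i\<in>insert k I. \<Sum>j\<in>insert k I. f i j) =
     f k k + (\<Sum>j\<in>I. f k j) + (\<Sum>i\<in>I. f i k) + (\<Sum>i\<in>I. \<Sum>j\<in>I. (f i j :: complex))"
  using assms by (simp add: sum.distrib)

lemma pivot_step:
  assumes fin: "finite I" and kI: "k \<notin> I" and P: "psdOn (insert k I) P"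
    and Q: "psdOn (insert k I) Q"
    and a: "P k k = of_real a" "a > 0"
    and IH: "\<And>P. psdOn I P \<Longrightarrow> 0 \<le> Re (\<Sum>i\<in>I. \<Sum>j\<in>I. P i j * Q j i)"
  shows "0 \<le> Re (\<Sum>i\<in>insert k I. \<Sum>j\<in>insert k I. P i j * Q j i)"
proof -
  define S where "S i j = P i j - P i k * P k j / of_real a" for i j
  have herm: "\<And>i j. i \<in> insert k I \<Longrightarrow> j \<in> insert k I \<Longrightarrow> P j i = cnj (P i j)"
    using P unfolding psdOn_def by blast
  have an: "(of_real a :: complex) \<noteq> 0" using a by simp
  have "psdOn I S"
    unfolding psdOn_def
  proof (intro conjI ballI allI)
    fix i j assume ij: "i\<in>I" "j\<in>I"
    show "S j i = cnj (S i j)"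
      using herm[of i j] herm[of i k] herm[of k j] ij by (simp add: S_def mult.commute)
  next
    fix v :: "'a \<Rightarrow> complex"
    define b where "b = (\<Sum>j\<in>I. P k j * v j)"
    define w where "w = v(k := - b / of_real a)"
    have cb: "(\<Sum>i\<in>I. cnj (v i) * P i k) = cnj b"
      unfolding b_def cnj_sum
    proof (rule sum.cong[OF refl])
      fix j assume "j \<in> I"
      hence "P j k = cnj (P k j)" using herm[of k j] by blast
      thus "cnj (v j) * P j k = cnj (P k j * v j)" by (simp add: mult.commute)
    qed
    have e1: "(\<Sum>i\<in>I. \<Sum>j\<in>I. cnj (v i) * S i j * v j) =
        (\<Sum>i\<in>I. \<Sum>j\<in>I. cnj (v i) * P i j * v j) - cnj b * b / of_real a"
    proof -
      have "(\<Sum>i\<in>I. \<Sum>j\<in>I. cnj (v i) * S i j * v j) =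
        (\<Sum>i\<in>I. \<Sum>j\<in>I. cnj (v i) * P i j * v j) - (\<Sum>i\<in>I. \<Sum>j\<in>I. (cnj (v i) * P i k) * (P k j * v j) / of_real a)"
        by (simp add: S_def sum_subtractf algebra_simps)
      also have "(\<Sum>i\<in>I. \<Sum>j\<in>I. (cnj (v i) * P i k) * (P k j * v j) / of_real a)
          = (\<Sum>i\<in>I. cnj (v i) * P i k) * (\<Sum>j\<in>I. P k j * v j) / of_real a"
        by (simp only: sum_distrib_right) (simp add: sum_distrib_left sum_divide_distrib)
      finally show ?thesis using cb b_def by simp
    qed
    have e2: "(\<Sum>i\<in>insert k I. \<Sum>j\<in>insert k I. cnj (w i) * P i j * w j) =
        (\<Sum>i\<in>I. \<Sum>j\<in>I. cnj (v i) * P i j * v j) - cnj b * b / of_real a"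
    proof -
      have wI: "\<And>i. i \<in> I \<Longrightarrow> w i = v i" using kI unfolding w_def by auto
      have "(\<Sum>i\<in>insert k I. \<Sum>j\<in>insert k I. cnj (w i) * P i j * w j) =
          cnj (w k) * P k k * w k + (\<Sum>j\<in>I. cnj (w k) * P k j * w j) + (\<Sum>i\<in>I. cnj (w i) * P i k * w k)
          + (\<Sum>i\<in>I. \<Sum>j\<in>I. cnj (w i) * P i j * w j)"
        by (rule sum_insert2[OF fin kI])
      also have "\<dots> = cnj (w k) * P k k * w k + cnj (w k) * b + cnj b * w k
          + (\<Sum>i\<in>I. \<Sum>j\<in>I. cnj (v i) * P i j * v j)"
      proof -
        have "(\<Sum>j\<in>I. cnj (w k) * P k j * w j) = cnj (w k) * b"
          unfolding b_def sum_distrib_left using wI by (intro sum.cong) (auto simp: mult.assoc)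
        moreover have "(\<Sum>i\<in>I. cnj (w i) * P i k * w k) = cnj b * w k"
          unfolding cb[symmetric] sum_distrib_right using wI by (intro sum.cong) auto
        moreover have "(\<Sum>i\<in>I. \<Sum>j\<in>I. cnj (w i) * P i j * w j) = (\<Sum>i\<in>I. \<Sum>j\<in>I. cnj (v i) * P i j * v j)"
          using wI by (intro sum.cong) auto
        ultimately show ?thesis by simp
      qed
      also have "\<dots> = (\<Sum>i\<in>I. \<Sum>j\<in>I. cnj (v i) * P i j * v j) - cnj b * b / of_real a"
        using an a(1) by (simp add: w_def field_simps)
      finally show ?thesis .
    qed
    have "0 \<le> Re (\<Sum>i\<in>insert k I. \<Sum>j\<in>insert k I. cnj (w i) * P i j * w j)"
      using P unfolding psdOn_def by blast
    thus "0 \<le> Re (\<Sum>i\<in>I. \<Sum>j\<in>I. cnj (v i) * S i j * v j)" using e1 e2 by simp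
  qed
  then have IHS: "0 \<le> Re (\<Sum>i\<in>I. \<Sum>j\<in>I. S i j * Q j i)" by (rule IH)
  have Sk1: "S k j = 0" for j using an a(1) by (simp add: S_def)
  have Sk2: "S i k = 0" for i using an a(1) by (simp add: S_def)
  define x where "x i = P i k" for i
  have split: "(\<Sum>i\<in>insert k I. \<Sum>j\<in>insert k I. P i j * Q j i) =
     (\<Sum>i\<in>I. \<Sum>j\<in>I. S i j * Q j i) + (\<Sum>j\<in>insert k I. \<Sum>i\<in>insert k I. cnj (x j) * Q j i * x i) / of_real a"
  proof -
    have "(\<Sum>i\<in>insert k I. \<Sum>j\<in>insert k I. P i j * Q j i) =
       (\<Sum>i\<in>insert k I. \<Sum>j\<in>insert k I. S i j * Q j i) + (\<Sum>i\<in>insert k I. \<Sum>j\<in>insert k I. P i k * P k j * Q j i / of_real a)"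
      by (simp add: S_def sum.distrib[symmetric] algebra_simps)
    also have "(\<Sum>i\<in>insert k I. \<Sum>j\<in>insert k I. S i j * Q j i) = (\<Sum>i\<in>I. \<Sum>j\<in>I. S i j * Q j i)"
      using sum_insert2[OF fin kI, of "\<lambda>i j. S i j * Q j i"] by (simp add: Sk1 Sk2)
    also have "(\<Sum>i\<in>insert k I. \<Sum>j\<in>insert k I. P i k * P k j * Q j i / of_real a)
        = (\<Sum>i\<in>insert k I. \<Sum>j\<in>insert k I. cnj (x j) * Q j i * x i) / of_real a"
      unfolding sum_divide_distrib
    proof (intro sum.cong refl)
      fix i j assume "j \<in> insert k I"
      hence "P k j = cnj (P j k)" using herm[of j k] by blast
      thus "P i k * P k j * Q j i / of_real a = cnj (x j) * Q j i * x i / of_real a"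
        by (simp add: x_def mult_ac)
    qed
    also have "(\<Sum>i\<in>insert k I. \<Sum>j\<in>insert k I. cnj (x j) * Q j i * x i) =
        (\<Sum>j\<in>insert k I. \<Sum>i\<in>insert k I. cnj (x j) * Q j i * x i)"
      by (rule sum.swap)
    finally show ?thesis .
  qed
  have "0 \<le> Re (\<Sum>j\<in>insert k I. \<Sum>i\<in>insert k I. cnj (x j) * Q j i * x i)"
    using Q unfolding psdOn_def by blast
  hence "0 \<le> Re ((\<Sum>j\<in>insert k I. \<Sum>i\<in>insert k I. cnj (x j) * Q j i * x i) / of_real a)"
    using a by (simp add: Re_divide_of_real)
  thus ?thesis using IHS split by simp
qed


lemma psdOn_mono:
  assumes "psdOn J Q" "I \<subseteq> J" "finite J" shows "psdOn I Q"
  unfolding psdOn_def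
proof (intro conjI ballI allI)
  fix i j assume "i \<in> I" "j \<in> I" thus "Q j i = cnj (Q i j)" using assms unfolding psdOn_def by blast
next
  fix v :: "'a \<Rightarrow> complex"
  define v' where "v' i = (if i \<in> I then v i else 0)" for i
  have "(\<Sum>i\<in>I. \<Sum>j\<in>I. cnj (v i) * Q i j * v j) = (\<Sum>i\<in>I. \<Sum>j\<in>I. cnj (v' i) * Q i j * v' j)"
    by (intro sum.cong refl) (simp add: v'_def)
  also have "\<dots> = (\<Sum>i\<in>I. \<Sum>j\<in>J. cnj (v' i) * Q i j * v' j)"
    by (rule sum.cong[OF refl], rule sum.mono_neutral_left[OF assms(3) assms(2)]) (simp add: v'_def)
  also have "\<dots> = (\<Sum>i\<in>J. \<Sum>j\<in>J. cnj (v' i) * Q i j * v' j)"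
    by (rule sum.mono_neutral_left[OF assms(3) assms(2)]) (simp add: v'_def)
  finally have "(\<Sum>i\<in>J. \<Sum>j\<in>J. cnj (v' i) * Q i j * v' j) = (\<Sum>i\<in>I. \<Sum>j\<in>I. cnj (v i) * Q i j * v j)" by simp
  moreover have "0 \<le> Re (\<Sum>i\<in>J. \<Sum>j\<in>J. cnj (v' i) * Q i j * v' j)" using assms unfolding psdOn_def by blast
  ultimately show "0 \<le> Re (\<Sum>i\<in>I. \<Sum>j\<in>I. cnj (v i) * Q i j * v j)" by simp
qed

lemma trace_psdOn:
  assumes "finite I" "psdOn I P" "psdOn I Q"
  shows "0 \<le> Re (\<Sum>i\<in>I. \<Sum>j\<in>I. P i j * Q j i)"
  using assms
proof (induction I arbitrary: P Q rule: finite_induct)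
  case empty then show ?case by simp
next
  case (insert k I)
  have QI: "psdOn I Q" by (rule psdOn_mono[OF insert.prems(2)]) (use insert.hyps in auto)
  have IH: "\<And>P. psdOn I P \<Longrightarrow> 0 \<le> Re (\<Sum>i\<in>I. \<Sum>j\<in>I. P i j * Q j i)"
    using insert.IH[OF _ QI] by this
  have fin: "finite (insert k I)" using insert.hyps by simp
  have d0: "0 \<le> Re (\<Sum>i\<in>insert k I. Q i i)"
    unfolding Re_sum by (intro sum_nonneg psdOn_diag_nonneg[OF insert.prems(2) fin])
  have "\<And>e. e > 0 \<Longrightarrow> - e * Re (\<Sum>i\<in>insert k I. Q i i) \<le> Re (\<Sum>i\<in>insert k I. \<Sum>j\<in>insert k I. P i j * Q j i)"
  proof -
    fix e :: real assume e: "e > 0"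
    define P' where "P' i j = P i j + (if i = j then of_real e else 0)" for i j
    have "psdOn (insert k I) P'"
      unfolding psdOn_def
    proof (intro conjI ballI allI)
      fix i j assume "i \<in> insert k I" "j \<in> insert k I"
      hence h: "P j i = cnj (P i j)" using insert.prems(1) unfolding psdOn_def by blast
      show "P' j i = cnj (P' i j)" unfolding P'_def by (subst h) auto
    next
      fix v :: "'a \<Rightarrow> complex"
      have pt: "cnj (v i) * P' i j * v j = cnj (v i) * P i j * v j + (if j = i then of_real e * (cnj (v i) * v i) else 0)" for i j
        by (simp add: P'_def algebra_simps)
      have "(\<Sum>i\<in>insert k I. \<Sum>j\<in>insert k I. cnj (v i) * P' i j * v j) =
        (\<Sum>i\<in>insert k I. \<Sum>j\<in>insert k I. cnj (v i) * P i j * v j) +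
        (\<Sum>i\<in>insert k I. \<Sum>j\<in>insert k I. if j = i then of_real e * (cnj (v i) * v i) else 0)"
        unfolding pt by (simp add: sum.distrib)
      also have "(\<Sum>i\<in>insert k I. \<Sum>j\<in>insert k I. if j = i then of_real e * (cnj (v i) * v i) else 0)
          = (\<Sum>i\<in>insert k I. of_real e * (cnj (v i) * v i))"
        using fin by (intro sum.cong refl) (simp add: sum.delta)
      finally have eq: "(\<Sum>i\<in>insert k I. \<Sum>j\<in>insert k I. cnj (v i) * P' i j * v j) =
        (\<Sum>i\<in>insert k I. \<Sum>j\<in>insert k I. cnj (v i) * P i j * v j) + (\<Sum>i\<in>insert k I. of_real e * (cnj (v i) * v i))" .
      have "0 \<le> Re (\<Sum>i\<in>insert k I. \<Sum>j\<in>insert k I. cnj (v i) * P i j * v j)"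
        using insert.prems(1) unfolding psdOn_def by blast
      moreover have "0 \<le> Re (\<Sum>i\<in>insert k I. of_real e * (cnj (v i) * v i))"
        unfolding Re_sum using e by (intro sum_nonneg) simp
      ultimately show "0 \<le> Re (\<Sum>i\<in>insert k I. \<Sum>j\<in>insert k I. cnj (v i) * P' i j * v j)"
        unfolding eq by simp
    qed
    moreover have "P' k k = of_real (Re (P k k) + e)" and "Re (P k k) + e > 0"
    proof -
      define r where "r = Re (P k k)"
      have h: "P k k = of_real r" "0 \<le> r"
        using psdOn_diag_real[OF insert.prems(1), of k] psdOn_diag_nonneg[OF insert.prems(1) fin, of k] unfolding r_def by auto
      show "P' k k = of_real (Re (P k k) + e)" unfolding P'_def using h by simp
      show "Re (P k k) + e > 0" using h e by simp
    qed
    ultimately have "0 \<le> Re (\<Sum>i\<in>insert k I. \<Sum>j\<in>insert k I. P' i j * Q j i)"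
      by (rule pivot_step[OF insert.hyps(1) insert.hyps(2) _ insert.prems(2) _ _ IH])
    also have "(\<Sum>i\<in>insert k I. \<Sum>j\<in>insert k I. P' i j * Q j i) =
       (\<Sum>i\<in>insert k I. \<Sum>j\<in>insert k I. P i j * Q j i) + of_real e * (\<Sum>i\<in>insert k I. Q i i)"
    proof -
      have pt: "P' i j * Q j i = P i j * Q j i + (if j = i then of_real e * Q i i else 0)" for i j
        by (simp add: P'_def algebra_simps)
      show ?thesis unfolding pt using fin by (simp add: sum.distrib sum.delta sum_distrib_left)
    qed
    finally show "- e * Re (\<Sum>i\<in>insert k I. Q i i) \<le> Re (\<Sum>i\<in>insert k I. \<Sum>j\<in>insert k I. P i j * Q j i)"
      by simp
  qed
  from pos_limit_aux[OF this d0] show ?case .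
qed




lemma mvc: "(A *v w) $ i = (\<Sum>j\<in>UNIV. A $ i $ j * w $ j)"
  by (simp add: matrix_vector_mult_def)

definition bf :: "complex^'n^'n \<Rightarrow> complex^'n \<Rightarrow> complex^'n \<Rightarrow> complex" where
  "bf A u w = (\<Sum>i\<in>UNIV. \<Sum>j\<in>UNIV. cnj (u $ i) * A $ i $ j * w $ j)"

lemma qform_bf: "qform A v = bf A v v"
  unfolding qform_def bf_def mvc by (simp add: sum_distrib_left mult.assoc)

lemma bf_mv: "bf A u w = (\<Sum>i\<in>UNIV. cnj (u $ i) * (A *v w) $ i)"
  unfolding bf_def mvc by (simp add: sum_distrib_left mult.assoc)

lemma herm_entry: "hermitian_mat A \<Longrightarrow> A $ j $ i = cnj (A $ i $ j)"
proof -
  assume "hermitian_mat A"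
  hence "adjoint_mat A $ j $ i = A $ j $ i" unfolding hermitian_mat_def by simp
  thus ?thesis unfolding adjoint_mat_def by simp
qed

lemma bf_herm: assumes "hermitian_mat A" shows "bf A u w = cnj (bf A w u)"
proof -
  have "cnj (bf A w u) = (\<Sum>i\<in>UNIV. \<Sum>j\<in>UNIV. w $ i * cnj (A $ i $ j) * cnj (u $ j))"
    unfolding bf_def cnj_sum by simp
  also have "\<dots> = (\<Sum>i\<in>UNIV. \<Sum>j\<in>UNIV. cnj (u $ j) * A $ j $ i * w $ i)"
    by (intro sum.cong refl) (simp add: herm_entry[OF assms, symmetric] mult_ac)
  also have "\<dots> = bf A u w" unfolding bf_def by (rule sum.swap)
  finally show ?thesis by simp
qed

lemma bf_add1: "bf A (u + u') w = bf A u w + bf A u' w"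
  unfolding bf_def by (simp add: algebra_simps sum.distrib)
lemma bf_add2: "bf A u (w + w') = bf A u w + bf A u w'"
  unfolding bf_def by (simp add: algebra_simps sum.distrib)
lemma vsc: "(c *\<^sub>R u) $ i = of_real c * (u $ i :: complex)"
  by (metis vector_scaleR_component scaleR_conv_of_real)
lemma bf_scale1: "bf A (c *\<^sub>R u) w = of_real c * bf A u w"
  unfolding bf_def vsc by (simp add: sum_distrib_left mult_ac)
lemma bf_scale2: "bf A u (c *\<^sub>R w) = of_real c * bf A u w"
  unfolding bf_def vsc by (simp add: sum_distrib_left mult_ac)

lemma bf_kernel: "A *v k = 0 \<Longrightarrow> bf A u k = 0"
  unfolding bf_mv by simp

lemma quad_aux:
  fixes c q :: real
  assumes "\<And>t. 0 \<le> 2 * t * c + t^2 * q" "0 \<le> q" shows "c = 0"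
proof (rule ccontr)
  assume "c \<noteq> 0"
  define t where "t = - c / (q + 1)"
  have q1: "q + 1 > 0" using assms(2) by simp
  have h1: "t^2 * q \<le> t^2 * (q+1)" by (simp add: mult_left_mono)
  have h2: "2*t*c = -2 * (c^2/(q+1))" unfolding t_def by (simp add: power2_eq_square)
  have "t^2 = c^2/(q+1)^2" unfolding t_def by (simp add: power_divide)
  hence h3: "t^2*(q+1) = c^2/(q+1)" using q1 by (simp add: power2_eq_square)
  have h4: "c^2/(q+1) > 0" using q1 \<open>c \<noteq> 0\<close> by simp
  have "2 * t * c + t^2 * q < 0" using h1 h2 h3 h4 by linarith
  thus False using assms(1)[of t] by simp
qed

lemma psd_qform_zero:
  assumes "psd A" "Re (qform A v) = 0" shows "A *v v = 0"
proof -
  have herm: "hermitian_mat A" using assms unfolding psd_def by simp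
  define u where "u = A *v v"
  have exp: "qform A (v + t *\<^sub>R u) = qform A v + of_real t * (bf A v u + bf A u v) + of_real (t^2) * qform A u" for t
    unfolding qform_bf bf_add1 bf_add2 bf_scale1 bf_scale2 by (simp add: algebra_simps power2_eq_square)
  have "\<And>t. 0 \<le> 2 * t * Re (bf A u v) + t^2 * Re (qform A u)"
  proof -
    fix t
    have "0 \<le> Re (qform A (v + t *\<^sub>R u))" using assms(1) unfolding psd_def by blast
    also have "Re (qform A (v + t *\<^sub>R u)) = 2 * t * Re (bf A u v) + t^2 * Re (qform A u)"
      unfolding exp using assms(2) bf_herm[OF herm, of v u] by simp
    finally show "0 \<le> 2 * t * Re (bf A u v) + t^2 * Re (qform A u)" .
  qed
  moreover have "0 \<le> Re (qform A u)" using assms(1) unfolding psd_def by blast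
  ultimately have "Re (bf A u v) = 0" by (rule quad_aux)
  moreover have "Re (bf A u v) = (\<Sum>i\<in>UNIV. (Re (u $ i))^2 + (Im (u $ i))^2)"
    unfolding bf_mv u_def[symmetric] by (simp add: Re_sum power2_eq_square)
  ultimately have "(\<Sum>i\<in>UNIV. (Re (u $ i))^2 + (Im (u $ i))^2) = 0" by simp
  hence "\<forall>i\<in>UNIV. (Re (u $ i))^2 + (Im (u $ i))^2 = 0" by (subst (asm) sum_nonneg_eq_0_iff) auto
  hence "u = 0" by (simp add: vec_eq_iff complex_eq_iff)
  thus ?thesis unfolding u_def .
qed




lemma msc: "(c *\<^sub>R A) $ i $ j = of_real c * (A $ i $ j :: complex)"
  by (metis vector_scaleR_component scaleR_conv_of_real)

lemma herm_iff: "hermitian_mat A \<longleftrightarrow> (\<forall>i j. A $ j $ i = cnj (A $ i $ j))"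
proof
  assume h: "hermitian_mat A"
  show "\<forall>i j. A $ j $ i = cnj (A $ i $ j)"
  proof (intro allI)
    fix i j
    have "adjoint_mat A $ j $ i = A $ j $ i" using h unfolding hermitian_mat_def by simp
    thus "A $ j $ i = cnj (A $ i $ j)" unfolding adjoint_mat_def by simp
  qed
next
  assume h: "\<forall>i j. A $ j $ i = cnj (A $ i $ j)"
  show "hermitian_mat A" unfolding hermitian_mat_def adjoint_mat_def vec_eq_iff
  proof (intro allI)
    fix i j
    have "A $ i $ j = cnj (A $ j $ i)" using h by blast
    thus "(\<chi> i j. cnj (A $ j $ i)) $ i $ j = A $ i $ j" by simp
  qed
qed

lemma psd_psdOn: "psd A \<Longrightarrow> psdOn UNIV (\<lambda>i j. A $ i $ j)"
  unfolding psdOn_def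
proof (intro conjI ballI allI)
  assume "psd A"
  hence h: "hermitian_mat A" unfolding psd_def by simp
  fix i j show "A $ j $ i = cnj (A $ i $ j)" using h herm_iff by blast
next
  fix v
  assume "psd A"
  hence "0 \<le> Re (qform A (\<chi> i. v i))" unfolding psd_def by blast
  thus "0 \<le> Re (\<Sum>i\<in>UNIV. \<Sum>j\<in>UNIV. cnj (v i) * A $ i $ j * v j)"
    unfolding qform_bf bf_def by simp
qed

lemma trace_mm: "trace (A ** B) = (\<Sum>i\<in>UNIV. \<Sum>k\<in>UNIV. A $ i $ k * B $ k $ i)"
  unfolding trace_def matrix_matrix_mult_def by simp

lemma trace0: "trace (0::complex^'n^'n) = 0" by (simp add: trace_def)

lemma trace_psd: "psd A \<Longrightarrow> psd B \<Longrightarrow> 0 \<le> Re (trace (A ** (B :: complex^'n^'n)))"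
proof -
  assume a: "psd A" "psd B"
  show ?thesis
    unfolding trace_mm using trace_psdOn[OF _ psd_psdOn[OF a(1)] psd_psdOn[OF a(2)]] by simp
qed

lemma qform_add: "qform (A + B) v = qform A v + qform B v"
  unfolding qform_bf bf_def by (simp add: algebra_simps sum.distrib)
lemma qform_diff: "qform (A - B) v = qform A v - qform B v"
  unfolding qform_bf bf_def by (simp add: algebra_simps sum_subtractf)
lemma qform_smult: "qform (c *\<^sub>R A) v = of_real c * qform A v"
  unfolding qform_bf bf_def msc by (simp add: sum_distrib_left mult_ac)
lemma qform_zero: "qform 0 v = 0"
  unfolding qform_bf bf_def by simp
lemma qform_vscale: "qform A (c *\<^sub>R v) = of_real (c^2) * qform A v"
  unfolding qform_bf bf_scale1 bf_scale2 by (simp add: power2_eq_square)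

lemma qform_sum: "qform (\<Sum>x\<in>S. p x *\<^sub>R A x) v = (\<Sum>x\<in>S. of_real (p x) * qform (A x) v)"
proof -
  have "qform (\<Sum>x\<in>S. p x *\<^sub>R A x) v = (\<Sum>x\<in>S. ((\<lambda>M. qform M v) \<circ> (\<lambda>x. p x *\<^sub>R A x)) x)"
    by (rule sum_comp_morphism[symmetric]) (simp_all add: qform_add qform_zero)
  thus ?thesis by (simp add: qform_smult)
qed

lemma trace_smult: "trace ((c *\<^sub>R A) ** F) = of_real c * trace (A ** (F :: complex^'n^'n))"
  unfolding trace_mm msc by (simp add: sum_distrib_left mult_ac)

lemma trace_sum_left:
  fixes A :: "'x \<Rightarrow> complex^'n^'n"
  shows "trace ((\<Sum>x\<in>S. p x *\<^sub>R A x) ** F) = (\<Sum>x\<in>S. of_real (p x) * trace (A x ** F))"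
proof -
  have "trace ((\<Sum>x\<in>S. p x *\<^sub>R A x) ** F) = (\<Sum>x\<in>S. ((\<lambda>M. trace (M ** F)) \<circ> (\<lambda>x. p x *\<^sub>R A x)) x)"
    by (rule sum_comp_morphism[symmetric]) (simp_all add: trace_mm algebra_simps sum.distrib trace0)
  thus ?thesis by (simp add: trace_smult)
qed

lemma trace_sum_sc: "trace (\<Sum>x\<in>S. p x *\<^sub>R A x) = (\<Sum>x\<in>S. of_real (p x) * trace (A x :: complex^'n^'n))"
  using trace_sum_left[of p A S "mat 1"] by simp

lemma trace_povm: "povm Y F \<Longrightarrow> (\<Sum>y\<in>Y. trace (A ** F y)) = trace (A :: complex^'n^'n)"
proof -
  assume "povm Y F"
  hence s: "(\<Sum>y\<in>Y. F y) = mat 1" unfolding povm_def by simp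
  have "(\<Sum>y\<in>Y. trace (A ** F y)) = (\<Sum>y\<in>Y. ((\<lambda>M. trace (A ** M)) \<circ> F) y)" by simp
  also have "\<dots> = trace (A ** (\<Sum>y\<in>Y. F y))"
    by (rule sum_comp_morphism) (simp_all add: trace_mm algebra_simps sum.distrib trace0)
  finally show ?thesis using s by simp
qed

lemma herm_combo: "hermitian_mat A \<Longrightarrow> hermitian_mat B \<Longrightarrow> hermitian_mat (c *\<^sub>R A - B)"
proof -
  assume a: "hermitian_mat A" "hermitian_mat B"
  show ?thesis unfolding herm_iff
  proof (intro allI)
    fix i j
    have "A $ j $ i = cnj (A $ i $ j)" "B $ j $ i = cnj (B $ i $ j)" using a unfolding herm_iff by blast+
    thus "(c *\<^sub>R A - B) $ j $ i = cnj ((c *\<^sub>R A - B) $ i $ j)" by (simp add: msc)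
  qed
qed

lemma psd_sum:
  assumes "\<And>x. x \<in> S \<Longrightarrow> psd (A x)" "\<And>x. x \<in> S \<Longrightarrow> 0 \<le> p x"
  shows "psd (\<Sum>x\<in>S. p x *\<^sub>R A x)"
  unfolding psd_def
proof (intro conjI allI)
  have "\<forall>i j. (\<Sum>x\<in>S. p x *\<^sub>R A x) $ j $ i = cnj ((\<Sum>x\<in>S. p x *\<^sub>R A x) $ i $ j)"
  proof (intro allI)
    fix i j
    have "\<And>x. x \<in> S \<Longrightarrow> A x $ j $ i = cnj (A x $ i $ j)"
      using assms(1) unfolding psd_def herm_iff by blast
    thus "(\<Sum>x\<in>S. p x *\<^sub>R A x) $ j $ i = cnj ((\<Sum>x\<in>S. p x *\<^sub>R A x) $ i $ j)"
      by (simp add: msc cnj_sum)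
  qed
  thus "hermitian_mat (\<Sum>x\<in>S. p x *\<^sub>R A x)" unfolding herm_iff .
next
  fix v
  show "0 \<le> Re (qform (\<Sum>x\<in>S. p x *\<^sub>R A x) v)"
    unfolding qform_sum Re_sum using assms unfolding psd_def
    by (intro sum_nonneg) simp
qed




lemma herm_kernel_qform:
  assumes "hermitian_mat A" "A *v k = 0" shows "qform A (k + w) = qform A w"
proof -
  have "bf A k k = 0" "bf A w k = 0" using bf_kernel[OF assms(2)] by auto
  moreover have "bf A k w = 0" using bf_herm[OF assms(1), of k w] \<open>bf A w k = 0\<close> by simp
  ultimately show ?thesis unfolding qform_bf bf_add1 bf_add2 by simp
qed

lemma supp_kernel:
  assumes "psd \<rho>" "hermitian_mat \<sigma>" "supp_op \<rho> \<subseteq> supp_op \<sigma>" "\<sigma> *v k = 0"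
  shows "\<rho> *v k = 0"
proof -
  have "\<rho> *v k \<in> supp_op \<sigma>" using assms(3) unfolding supp_op_def by blast
  then obtain u where u: "\<rho> *v k = \<sigma> *v u" unfolding supp_op_def by blast
  have "qform \<rho> k = bf \<sigma> k u" unfolding qform_bf bf_mv u ..
  also have "\<dots> = cnj (bf \<sigma> u k)" by (rule bf_herm[OF assms(2)])
  also have "\<dots> = 0" using bf_kernel[OF assms(4)] by simp
  finally show ?thesis using psd_qform_zero[OF assms(1)] by simp
qed

lemma mv_add: "A *v (x + y) = A *v x + A *v (y :: complex^'n)"
  by (simp add: vec_eq_iff mvc algebra_simps sum.distrib)

lemma mv_scale: "A *v (c *\<^sub>R x) = c *\<^sub>R (A *v (x :: complex^'n))"
  by (simp only: vec_eq_iff mvc vsc) (simp add: sum_distrib_left mult_ac)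

lemma exists_mu:
  fixes \<rho> \<sigma> :: "complex^'n^'n"
  assumes r: "psd \<rho>" and s: "psd \<sigma>" and supp: "supp_op \<rho> \<subseteq> supp_op \<sigma>"
  shows "\<exists>\<mu>. loewner_le \<rho> (\<mu> *\<^sub>R \<sigma>)"
proof -
  have hs: "hermitian_mat \<sigma>" and hr: "hermitian_mat \<rho>" using r s unfolding psd_def by auto
  define K where "K = {k. \<sigma> *v k = 0}"
  have "subspace K"
    unfolding K_def by (rule subspaceI) (auto simp: mv_add mv_scale)
  hence spK: "span K = K" by simp
  define W where "W = sphere (0::complex^'n) 1 \<inter> (\<Inter>k\<in>K. {w. inner k w = 0})"
  have cW: "compact W" unfolding W_def
    by (intro compact_Int_closed compact_sphere closed_INT ballI closed_hyperplane)
  define f where "f w = Re (qform \<sigma> w)" for w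
  define g where "g w = Re (qform \<rho> w)" for w
  have qexp: "qform A w = (\<Sum>i\<in>UNIV. \<Sum>j\<in>UNIV. cnj (w $ i) * A $ i $ j * w $ j)" for A :: "complex^'n^'n" and w
    unfolding qform_bf bf_def ..
  have cf: "continuous_on W f" unfolding f_def qexp by (intro continuous_intros)
  have cg: "continuous_on W g" unfolding g_def qexp by (intro continuous_intros)
  have f0: "f w \<ge> 0" for w using s unfolding psd_def f_def by blast
  have decomp: "\<exists>z. g v = g z \<and> f v = f z \<and> (z = 0 \<or> (z \<noteq> 0 \<and> (1 / norm z) *\<^sub>R z \<in> W))" for v
  proof -
    obtain y z where y: "y \<in> span K" and z: "\<And>w. w \<in> span K \<Longrightarrow> orthogonal z w" and v: "v = y + z"
      using orthogonal_subspace_decomp_exists[of K v] by blast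
    have yK: "\<sigma> *v y = 0" using y spK unfolding K_def by auto
    have yK': "\<rho> *v y = 0" by (rule supp_kernel[OF r hs supp yK])
    have "g v = g z" unfolding g_def v herm_kernel_qform[OF hr yK'] ..
    moreover have "f v = f z" unfolding f_def v herm_kernel_qform[OF hs yK] ..
    moreover have "z = 0 \<or> (z \<noteq> 0 \<and> (1 / norm z) *\<^sub>R z \<in> W)"
    proof (cases "z = 0")
      case False
      have "(1 / norm z) *\<^sub>R z \<in> sphere 0 1" using False by (simp add: norm_scaleR)
      moreover have "inner k ((1 / norm z) *\<^sub>R z) = 0" if "k \<in> K" for k
        using z[of k] that spK unfolding orthogonal_def by (simp add: inner_commute)
      ultimately show ?thesis using False unfolding W_def by auto
    qed simp
    ultimately show ?thesis by blast
  qed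
  have fscale: "f z = (norm z)^2 * f ((1 / norm z) *\<^sub>R z)" and gscale: "g z = (norm z)^2 * g ((1 / norm z) *\<^sub>R z)"
    if "z \<noteq> 0" for z
    using that unfolding f_def g_def qform_vscale by (simp_all add: power2_eq_square)
  show ?thesis
  proof (cases "W = {}")
    case True
    have "loewner_le \<rho> (0 *\<^sub>R \<sigma>)"
      unfolding loewner_le_def psd_def
    proof (intro conjI allI)
      show "hermitian_mat (0 *\<^sub>R \<sigma> - \<rho>)" by (rule herm_combo[OF hs hr])
      fix v
      obtain z where "g v = g z" "z = 0" using decomp[of v] True by blast
      hence "g v = 0" unfolding g_def by (simp add: qform_bf bf_def)
      thus "0 \<le> Re (qform (0 *\<^sub>R \<sigma> - \<rho>) v)" unfolding qform_diff qform_smult g_def by simp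
    qed
    thus ?thesis by blast
  next
    case False
    obtain w0 where w0: "w0 \<in> W" "\<And>w. w \<in> W \<Longrightarrow> f w0 \<le> f w"
      using continuous_attains_inf[OF cW False cf] by blast
    obtain w1 where w1: "w1 \<in> W" "\<And>w. w \<in> W \<Longrightarrow> g w \<le> g w1"
      using continuous_attains_sup[OF cW False cg] by blast
    define m where "m = f w0"
    have "m > 0"
    proof (rule ccontr)
      assume "\<not> m > 0"
      hence "Re (qform \<sigma> w0) = 0" using f0[of w0] unfolding m_def f_def by simp
      hence "\<sigma> *v w0 = 0" by (rule psd_qform_zero[OF s])
      hence "w0 \<in> K" unfolding K_def by simp
      hence "inner w0 w0 = 0" using w0(1) unfolding W_def by blast
      hence "w0 = 0" by simp
      thus False using w0(1) unfolding W_def by simp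
    qed
    define C where "C = max (g w1) 0"
    define \<mu> where "\<mu> = C / m"
    have mu0: "\<mu> \<ge> 0" unfolding \<mu>_def C_def using \<open>m > 0\<close> by simp
    have bound: "g v \<le> \<mu> * f v" for v
    proof -
      obtain z where z: "g v = g z" "f v = f z" "z = 0 \<or> (z \<noteq> 0 \<and> (1 / norm z) *\<^sub>R z \<in> W)"
        using decomp[of v] by blast
      show ?thesis
      proof (cases "z = 0")
        case True
        hence "g z = 0" "f z = 0" unfolding g_def f_def by (simp_all add: qform_bf bf_def)
        thus ?thesis using z by simp
      next
        case False
        define w where "w = (1 / norm z) *\<^sub>R z"
        have wW: "w \<in> W" using z(3) False unfolding w_def by blast
        have "g w \<le> C" using w1(2)[OF wW] unfolding C_def by simp
        also have "C = \<mu> * m" unfolding \<mu>_def using \<open>m > 0\<close> by simp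
        also have "\<mu> * m \<le> \<mu> * f w" using w0(2)[OF wW] mu0 unfolding m_def by (simp add: mult_left_mono)
        finally have "g w \<le> \<mu> * f w" .
        hence "(norm z)^2 * g w \<le> (norm z)^2 * (\<mu> * f w)" by (simp add: mult_left_mono)
        thus ?thesis using z(1,2) fscale[OF False] gscale[OF False] unfolding w_def by (simp add: mult_ac)
      qed
    qed
    have "loewner_le \<rho> (\<mu> *\<^sub>R \<sigma>)"
      unfolding loewner_le_def psd_def
    proof (intro conjI allI)
      show "hermitian_mat (\<mu> *\<^sub>R \<sigma> - \<rho>)" by (rule herm_combo[OF hs hr])
      fix v
      show "0 \<le> Re (qform (\<mu> *\<^sub>R \<sigma> - \<rho>) v)"
        using bound[of v] unfolding qform_diff qform_smult f_def g_def by simp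
    qed
    thus ?thesis by blast
  qed
qed




lemma trace_diff: "trace ((A - B) ** F) = trace (A ** F) - trace (B ** (F :: complex^'n^'n))"
  unfolding trace_mm by (simp add: algebra_simps sum_subtractf)

lemma main_bound:
  fixes \<rho> :: "'x \<Rightarrow> complex^'n^'n"
  assumes fin: "finite X" and ne: "X \<noteq> {}" and dens: "\<And>x. x \<in> X \<Longrightarrow> density_op (\<rho> x)"
    and pi: "\<pi> \<in> prob_dist X" and P: "povm Y F"
  shows "ereal (log 2 (\<Sum>y\<in>Y. Max ((\<lambda>x. Re (trace (\<rho> x ** F y))) ` X)))
     \<le> Max ((\<lambda>x. Dmax (\<rho> x) (\<Sum>x'\<in>X. \<pi> x' *\<^sub>R \<rho> x')) ` X)"
proof -
  define \<sigma> where "\<sigma> = (\<Sum>x'\<in>X. \<pi> x' *\<^sub>R \<rho> x')"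
  have psdr: "\<And>x. x \<in> X \<Longrightarrow> psd (\<rho> x)" using dens unfolding density_op_def by blast
  have trr: "\<And>x. x \<in> X \<Longrightarrow> trace (\<rho> x) = 1" using dens unfolding density_op_def by blast
  have pi0: "\<And>x. x \<in> X \<Longrightarrow> 0 \<le> \<pi> x" and pi1: "(\<Sum>x\<in>X. \<pi> x) = 1"
    using pi unfolding prob_dist_def by auto
  have psds: "psd \<sigma>" unfolding \<sigma>_def by (rule psd_sum[OF psdr pi0])
  have trs: "trace \<sigma> = 1"
  proof -
    have "trace \<sigma> = (\<Sum>x\<in>X. of_real (\<pi> x) * trace (\<rho> x))" unfolding \<sigma>_def by (rule trace_sum_sc)
    also have "\<dots> = (\<Sum>x\<in>X. of_real (\<pi> x))" using trr by simp
    also have "\<dots> = 1" using pi1 by (metis of_real_1 of_real_sum)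
    finally show ?thesis .
  qed
  have psdF: "\<And>y. y \<in> Y \<Longrightarrow> psd (F y)" and finY: "finite Y" using P unfolding povm_def by auto
  define t where "t y = Re (trace (\<sigma> ** F y))" for y
  have t0: "\<And>y. y \<in> Y \<Longrightarrow> 0 \<le> t y" unfolding t_def by (rule trace_psd[OF psds psdF])
  have tsum: "(\<Sum>y\<in>Y. t y) = 1" unfolding t_def Re_sum[symmetric] trace_povm[OF P] trs by simp
  define L where "L = (\<Sum>y\<in>Y. Max ((\<lambda>x. Re (trace (\<rho> x ** F y))) ` X))"
  obtain x0 where x0: "x0 \<in> X" using ne by blast
  have L1: "1 \<le> L"
  proof -
    have "1 = Re (\<Sum>y\<in>Y. trace (\<rho> x0 ** F y))" unfolding trace_povm[OF P] trr[OF x0] by simp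
    also have "\<dots> = (\<Sum>y\<in>Y. Re (trace (\<rho> x0 ** F y)))" by (simp add: Re_sum)
    also have "\<dots> \<le> L" unfolding L_def
      by (intro sum_mono Max_ge) (use fin x0 in auto)
    finally show ?thesis .
  qed
  show ?thesis
  proof (cases "\<forall>x\<in>X. supp_op (\<rho> x) \<subseteq> supp_op \<sigma>")
    case False
    then obtain x1 where x1: "x1 \<in> X" "\<not> supp_op (\<rho> x1) \<subseteq> supp_op \<sigma>" by blast
    have "Dmax (\<rho> x1) \<sigma> = \<infinity>" using x1 unfolding Dmax_def by simp
    moreover have "Dmax (\<rho> x1) \<sigma> \<le> Max ((\<lambda>x. Dmax (\<rho> x) \<sigma>) ` X)"
      by (rule Max_ge) (use fin x1 in auto)
    ultimately show ?thesis unfolding \<sigma>_def[symmetric] by simp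
  next
    case True
    define S where "S x = {\<mu>::real. loewner_le (\<rho> x) (\<mu> *\<^sub>R \<sigma>)}" for x
    define m where "m x = Inf (S x)" for x
    have Sne: "\<And>x. x \<in> X \<Longrightarrow> S x \<noteq> {}"
      unfolding S_def using exists_mu[OF psdr psds] True by blast
    have Dm: "\<And>x. x \<in> X \<Longrightarrow> Dmax (\<rho> x) \<sigma> = ereal (log 2 (m x))"
      unfolding Dmax_def m_def S_def using True by simp
    have trb: "Re (trace (\<rho> x ** F y)) \<le> m x * t y" if x: "x \<in> X" and y: "y \<in> Y" for x y
    proof -
      have key: "Re (trace (\<rho> x ** F y)) \<le> \<mu> * t y" if "\<mu> \<in> S x" for \<mu>
      proof -
        have "psd (\<mu> *\<^sub>R \<sigma> - \<rho> x)" using that unfolding S_def loewner_le_def by simp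
        hence "0 \<le> Re (trace ((\<mu> *\<^sub>R \<sigma> - \<rho> x) ** F y))" by (rule trace_psd[OF _ psdF[OF y]])
        thus ?thesis unfolding trace_diff trace_smult t_def by simp
      qed
      show ?thesis
      proof (cases "t y = 0")
        case True
        obtain \<mu> where "\<mu> \<in> S x" using Sne[OF x] by blast
        thus ?thesis using key[of \<mu>] True by simp
      next
        case False
        hence tp: "t y > 0" using t0[OF y] by simp
        have "Re (trace (\<rho> x ** F y)) / t y \<le> m x" unfolding m_def
          by (rule cInf_greatest[OF Sne[OF x]]) (use key tp in \<open>simp add: divide_le_eq\<close>)
        thus ?thesis using tp by (simp add: divide_le_eq mult.commute)
      qed
    qed
    have "Max (m ` X) \<in> m ` X" using fin ne by (intro Max_in) auto
    then obtain xs where xs: "xs \<in> X" "m xs = Max (m ` X)" by (metis imageE)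
    have mle: "\<And>x. x \<in> X \<Longrightarrow> m x \<le> m xs" using xs(2) fin by simp
    have "L \<le> (\<Sum>y\<in>Y. m xs * t y)" unfolding L_def
    proof (intro sum_mono Max.boundedI)
      fix y x assume y: "y \<in> Y" and "x \<in> (\<lambda>x. Re (trace (\<rho> x ** F y))) ` X"
      then obtain x' where x': "x' \<in> X" "x = Re (trace (\<rho> x' ** F y))" by blast
      have "x \<le> m x' * t y" using trb[OF x'(1) y] x'(2) by simp
      also have "\<dots> \<le> m xs * t y" using mle[OF x'(1)] t0[OF y] by (simp add: mult_right_mono)
      finally show "x \<le> m xs * t y" .
    qed (use fin ne in auto)
    also have "\<dots> = m xs" using tsum by (simp add: sum_distrib_left[symmetric])
    finally have Lm: "L \<le> m xs" .
    have "log 2 L \<le> log 2 (m xs)" using L1 Lm by simp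
    hence "ereal (log 2 L) \<le> Dmax (\<rho> xs) \<sigma>" using Dm[OF xs(1)] by simp
    also have "\<dots> \<le> Max ((\<lambda>x. Dmax (\<rho> x) \<sigma>) ` X)"
      by (rule Max_ge) (use fin xs in auto)
    finally show ?thesis unfolding L_def \<sigma>_def .
  qed
qed

theorem corollary2:
  fixes X :: "'x set" and \<rho> :: "'x \<Rightarrow> complex^'n^'n"
  assumes "finite X" and "X \<noteq> {}"
    and "\<And>x. x \<in> X \<Longrightarrow> density_op (\<rho> x)"
  shows "max_quantum_leakage X \<rho> \<le> barycentric_leakage X \<rho>
       \<and> barycentric_leakage X \<rho> \<le> pairwise_leakage X \<rho>"
proof
  show "max_quantum_leakage X \<rho> \<le> barycentric_leakage X \<rho>"
    unfolding max_quantum_leakage_def barycentric_leakage_def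
  proof (intro INF_greatest SUP_least, goal_cases)
    case (1 \<pi> YF)
    then obtain Y F where YF: "YF = (Y, F)" "povm Y F" by blast
    from 1 have pi: "\<pi> \<in> prob_dist X" by blast
    show ?case unfolding YF(1) fst_conv snd_conv by (rule main_bound[OF assms pi YF(2)])
  qed
next
  obtain x0 where x0: "x0 \<in> X" using assms(2) by blast
  define d where "d x = (if x = x0 then 1 else 0 :: real)" for x
  have dp: "d \<in> prob_dist X" unfolding prob_dist_def d_def using assms(1) x0 by (simp add: sum.delta)
  have ds: "(\<Sum>x'\<in>X. d x' *\<^sub>R \<rho> x') = \<rho> x0"
  proof -
    have "(\<Sum>x'\<in>X. d x' *\<^sub>R \<rho> x') = (\<Sum>x'\<in>X. if x' = x0 then \<rho> x' else 0)"
      by (intro sum.cong) (auto simp: d_def)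
    also have "\<dots> = \<rho> x0" using assms(1) x0 by (simp add: sum.delta)
    finally show ?thesis .
  qed
  have "barycentric_leakage X \<rho> \<le> Max ((\<lambda>x. Dmax (\<rho> x) (\<Sum>x'\<in>X. d x' *\<^sub>R \<rho> x')) ` X)"
    unfolding barycentric_leakage_def by (rule INF_lower[OF dp])
  also have "\<dots> = Max ((\<lambda>x. Dmax (\<rho> x) (\<rho> x0)) ` X)" unfolding ds ..
  also have "\<dots> \<le> pairwise_leakage X \<rho>"
    unfolding pairwise_leakage_def
  proof (rule Max.boundedI)
    show "finite ((\<lambda>x. Dmax (\<rho> x) (\<rho> x0)) ` X)" using assms(1) by simp
    show "(\<lambda>x. Dmax (\<rho> x) (\<rho> x0)) ` X \<noteq> {}" using assms(2) by simp
    fix a assume "a \<in> (\<lambda>x. Dmax (\<rho> x) (\<rho> x0)) ` X"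
    then obtain x where x: "x \<in> X" "a = Dmax (\<rho> x) (\<rho> x0)" by blast
    have "(x, x0) \<in> X \<times> X" using x x0 by simp
    hence "a \<in> (\<lambda>(x, x'). Dmax (\<rho> x) (\<rho> x')) ` (X \<times> X)" using x(2) by force
    thus "a \<le> Max ((\<lambda>(x, x'). Dmax (\<rho> x) (\<rho> x')) ` (X \<times> X))"
      by (rule Max_ge[rotated]) (use assms(1) in simp)
  qed
  finally show "barycentric_leakage X \<rho> \<le> pairwise_leakage X \<rho>" .
qed


end
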